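(* Let $(\mathcal X,d)$ be a finite distance space and $\mathcal C=\{C_1,\ldots,C_k\}$ any clustering of $\mathcal X$ with cores $C_1^o,\ldots,C_k^o$, and let $\beta=\min_i|C_i^o|/|\mathcal X|$. Fix an integer $\ell$ with $k\le\ell\le|\mathcal X|$. Then for any ordering of $\mathcal X$, with probability at least $1-ke^{-\beta\ell}$ (over the internal randomness of Algorithm subsample), the final set $T$ produced by Algorithm subsample with parameter $\ell$ induces (when listed in any order) a clustering of $\mathcal X$ that is a refinement of $\mathcal C$.
   Context: A distance space $(\mathcal X,d)$ is a set with a symmetric function $d:\mathcal X\times\mathcal X\to\mathbb R_{\ge0}$ with $d(x,x)=0$. A clustering of $\mathcal X$ is a set of nonempty, pairwise disjoint subsets whose union is $\mathcal X$. The core of cluster $C_i$ is the maximal subset $C_i^o\subset C_i$ such that $d(x,z)<d(x,y)$ for all $x\in C_i$, $z\in C_i^o$, $y\notin C_i$. A list $T=(t_1,\ldots,t_m)$ induces the clustering of $\mathcal X$ assigning each $x$ to the index $i$ minimizing $d(x,t_i)$ (ties by smallest $i$), empty clusters discarded. $\mathcal C$ is a refinement of $\mathcal C'$ if $x\sim_{\mathcal C}y$ implies $x\sim_{\mathcal C'}y$, where $x\sim_{\mathcal C}y$ means $x,y$ lie in the same cluster of $\mathcal C$. Algorithm subsample with parameter $\ell$, on input sequence $x_1,\ldots,x_N$: set $T=\{x_1,\ldots,x_\ell\}$; for $t=\ell+1,\ldots,N$: receive $x_t$, and with probability $\ell/t$ (independently) remove an element of $T$ chosen uniformly at random and add $x_t$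 to $T$. Output the final $T$. *)

theory Defs
  imports "HOL-Probability.Probability" "HOL-Library.Disjoint_Sets"
begin

definition distance_space :: "'a set \<Rightarrow> ('a \<Rightarrow> 'a \<Rightarrow> real) \<Rightarrow> bool" where
  "distance_space X d \<longleftrightarrow>
     (\<forall>x\<in>X. \<forall>y\<in>X. d x y = d y x \<and> d x y \<ge> 0) \<and> (\<forall>x\<in>X. d x x = 0)"

text \<open>The core of a cluster C of X: the maximal subset Co of C with
  d x z < d x y for all x in C, z in Co, y in X - C.  Since the condition is pointwise
  in z, the maximal such subset is exactly the following set.\<close>
definition core :: "'a set \<Rightarrow> ('a \<Rightarrow> 'a \<Rightarrow> real) \<Rightarrow> 'a set \<Rightarrow> 'a set" where
  "core X d C = {z \<in> C. \<forall>x\<in>C. \<forall>y\<in>X - C. d x z < d x y}"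

definition assign :: "('a \<Rightarrow> 'a \<Rightarrow> real) \<Rightarrow> 'a list \<Rightarrow> 'a \<Rightarrow> nat" where
  "assign d ts x = (LEAST i. i < length ts \<and> (\<forall>j<length ts. d x (ts ! i) \<le> d x (ts ! j)))"

definition induced_clustering :: "'a set \<Rightarrow> ('a \<Rightarrow> 'a \<Rightarrow> real) \<Rightarrow> 'a list \<Rightarrow> 'a set set" where
  "induced_clustering X d ts = {{x \<in> X. assign d ts x = i} | i. i < length ts} - {{}}"

definition same_cluster :: "'a set set \<Rightarrow> 'a \<Rightarrow> 'a \<Rightarrow> bool" where
  "same_cluster P x y \<longleftrightarrow> (\<exists>B\<in>P. x \<in> B \<and> y \<in> B)"

definition refinement :: "'a set set \<Rightarrow> 'a set set \<Rightarrow> bool" where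
  "refinement P Q \<longleftrightarrow> (\<forall>x y. same_cluster P x y \<longrightarrow> same_cluster Q x y)"

text \<open>Algorithm subsample.  subsample_aux l t xs T processes the remaining input xs,
  where t is the (1-based) time index of the head of xs.\<close>
fun subsample_aux :: "nat \<Rightarrow> nat \<Rightarrow> 'a list \<Rightarrow> 'a set \<Rightarrow> 'a set pmf" where
  "subsample_aux l t [] T = return_pmf T"
| "subsample_aux l t (x # xs) T =
     bind_pmf (bernoulli_pmf (real l / real t)) (\<lambda>b.
       bind_pmf (if b then map_pmf (\<lambda>y. insert x (T - {y})) (pmf_of_set T) else return_pmf T)
         (\<lambda>T'. subsample_aux l (Suc t) xs T'))"

definition subsample :: "nat \<Rightarrow> 'a list \<Rightarrow> 'a set pmf" where
  "subsample l xs = subsample_aux l (Suc l) (drop l xs) (set (take l xs))"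

end

theory Submission
  imports Defs
begin


definition subs :: "nat \<Rightarrow> 'a set \<Rightarrow> 'a set set" where
  "subs l A = {B. B \<subseteq> A \<and> card B = l}"

lemma subs_finite: "finite A \<Longrightarrow> finite (subs l A)"
  unfolding subs_def by (rule finite_subset[of _ "Pow A"]) auto

lemma subs_ne: "finite A \<Longrightarrow> l \<le> card A \<Longrightarrow> subs l A \<noteq> {}"
  unfolding subs_def using obtain_subset_with_card_n by (metis (mono_tags, lifting) empty_Collect_eq)

lemma card_subs: "finite A \<Longrightarrow> card (subs l A) = card A choose l"
  unfolding subs_def by (rule n_subsets)

lemma step_uniform:
  assumes A: "finite A" and x: "x \<notin> A" and l: "l \<le> card A" and t: "t = Suc (card A)"
  shows "bind_pmf (pmf_of_set (subs l A)) (\<lambda>T. bind_pmf (bernoulli_pmf (real l / real t)) (\<lambda>b.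
            if b then map_pmf (\<lambda>y. insert x (T - {y})) (pmf_of_set T) else return_pmf T))
         = pmf_of_set (subs l (insert x A))"
proof (cases "l = 0")
  case True
  have e: "subs 0 B = {{}}" if "finite B" for B :: "'a set" using that unfolding subs_def
    by (auto simp: card_eq_0_iff intro: finite_subset)
  have b0: "bernoulli_pmf 0 = return_pmf False"
    by (rule pmf_eqI) (case_tac i; simp add: pmf_return)
  show ?thesis using True A by (simp add: e b0 pmf_of_set_singleton bind_return_pmf)
next
  case False
  define n where "n = card A"
  define p where "p = real l / real t"
  have p0: "0 \<le> p" and p1: "p \<le> 1" using l t by (auto simp: p_def n_def)
  have fin: "finite (subs l A)" and ne: "subs l A \<noteq> {}" using A l by (simp_all add: subs_finite subs_ne)
  have fin': "finite (subs l (insert x A))" and ne': "subs l (insert x A) \<noteq> {}"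
    using A l x by (simp_all add: subs_finite subs_ne)
  define F where "F = (\<lambda>S T. {y\<in>T. insert x (T - {y}) = S})"
  have stp: "pmf (bind_pmf (bernoulli_pmf p) (\<lambda>b.
            if b then map_pmf (\<lambda>y. insert x (T - {y})) (pmf_of_set T) else return_pmf T)) S
          = p * (real (card (F S T)) / real l) + (1 - p) * (if T = S then 1 else 0)"
    if T: "T \<in> subs l A" for T S
  proof -
    have Tf: "finite T" "T \<noteq> {}" "card T = l" using T A False unfolding subs_def
      by (auto intro: finite_subset)
    have "pmf (map_pmf (\<lambda>y. insert x (T - {y})) (pmf_of_set T)) S = real (card (F S T)) / real l"
      unfolding pmf_map using Tf
      by (subst measure_pmf_of_set) (auto simp: F_def Int_def vimage_def)
    then show ?thesis using p0 p1 by (simp add: pmf_bind pmf_return indicator_def)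
  qed
  show ?thesis
  proof (rule pmf_eqI)
    fix S
    have "pmf (bind_pmf (pmf_of_set (subs l A)) (\<lambda>T. bind_pmf (bernoulli_pmf (real l / real t)) (\<lambda>b.
            if b then map_pmf (\<lambda>y. insert x (T - {y})) (pmf_of_set T) else return_pmf T))) S
        = (\<Sum>T\<in>subs l A. p * (real (card (F S T)) / real l) + (1 - p) * (if T = S then 1 else 0))
            / card (subs l A)"
      unfolding pmf_bind using fin ne
      by (subst integral_pmf_of_set) (auto simp: p_def[symmetric] stp[unfolded pmf_bind] intro!: sum.cong)
    also have "\<dots> = (p / real l * real (\<Sum>T\<in>subs l A. card (F S T)) + (1 - p) * (if S \<in> subs l A then 1 else 0))
            / card (subs l A)"
      using fin by (simp add: sum.distrib sum_distrib_left[symmetric] sum_divide_distrib[symmetric])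
    finally have L: "pmf (bind_pmf (pmf_of_set (subs l A)) (\<lambda>T. bind_pmf (bernoulli_pmf (real l / real t)) (\<lambda>b.
            if b then map_pmf (\<lambda>y. insert x (T - {y})) (pmf_of_set T) else return_pmf T))) S
        = (p / real l * real (\<Sum>T\<in>subs l A. card (F S T)) + (1 - p) * (if S \<in> subs l A then 1 else 0))
            / card (subs l A)" .
    show "pmf (bind_pmf (pmf_of_set (subs l A)) (\<lambda>T. bind_pmf (bernoulli_pmf (real l / real t)) (\<lambda>b.
            if b then map_pmf (\<lambda>y. insert x (T - {y})) (pmf_of_set T) else return_pmf T))) S
        = pmf (pmf_of_set (subs l (insert x A))) S"
    proof -
      have notin: "\<And>T y. T \<in> subs l A \<Longrightarrow> y \<in> T \<Longrightarrow> insert x (T - {y}) \<in> subs l (insert x A)"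
      proof -
        fix T y assume T: "T \<in> subs l A" and y: "y \<in> T"
        have "finite T" "x \<notin> T" using T A x unfolding subs_def by (auto intro: finite_subset)
        then show "insert x (T - {y}) \<in> subs l (insert x A)" using T y False unfolding subs_def
          by (auto simp: card_Diff_singleton)
      qed
      show ?thesis
      proof (cases "S \<in> subs l (insert x A)")
        case Sin: True
        have r: "pmf (pmf_of_set (subs l (insert x A))) S = 1 / real (Suc n choose l)"
          using Sin fin' ne' A x by (simp add: card_subs n_def)
        have bc: "real (Suc n - l) * real (Suc n choose l) = real (Suc n) * real (n choose l)"
          using binomial_absorb_comp[of "Suc n" l] by (metis diff_Suc_1 of_nat_mult)
        have Nc: "card (subs l A) = n choose l" using A by (simp add: card_subs n_def)
        have npos: "real (n choose l) > 0" using l by (simp add: n_def)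
        have goal: "(1 - p) / real (n choose l) = 1 / real (Suc n choose l)"
        proof -
          have e1: "1 - p = real (Suc n - l) / real (Suc n)"
            using l t by (simp add: p_def n_def field_simps of_nat_diff)
          have pos: "real (Suc n - l) > 0" using l by (simp add: n_def)
          have "(1 - p) / real (n choose l) = real (Suc n - l) / (real (Suc n) * real (n choose l))"
            unfolding e1 by simp
          also have "\<dots> = real (Suc n - l) / (real (Suc n - l) * real (Suc n choose l))"
            by (subst bc[symmetric]) (rule refl)
          also have "\<dots> = 1 / real (Suc n choose l)" using pos by simp
          finally show ?thesis .
        qed
        show ?thesis
        proof (cases "x \<in> S")
          case False
          have S0: "S \<in> subs l A" using Sin False unfolding subs_def by auto
          have "\<And>T. F S T = {}" using False by (auto simp: F_def)
          then have "(\<Sum>T\<in>subs l A. card (F S T)) = 0" by simp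
          then show ?thesis using L r S0 Nc goal by simp
        next
          case xS: True
          define S' where "S' = S - {x}"
          have S'A: "S' \<subseteq> A" and xS': "x \<notin> S'" and S'f: "finite S'" and cS': "card S' = l - 1"
            and SS': "S = insert x S'"
            using Sin xS A unfolding subs_def S'_def by (auto intro: finite_subset)
          have S0: "S \<notin> subs l A" using xS x unfolding subs_def by auto
          have sig: "Sigma (subs l A) (F S) = (\<lambda>y. (insert y S', y)) ` (A - S')"
          proof (rule set_eqI, rule iffI)
            fix z assume z: "z \<in> Sigma (subs l A) (F S)"
            then obtain T y where zz: "z = (T, y)" "T \<in> subs l A" "y \<in> T" "insert x (T - {y}) = S"
              by (auto simp: F_def)
            have "x \<notin> T" using zz x unfolding subs_def by auto
            then have "T - {y} = S'" using zz(4) SS' xS' by (metis Diff_insert_absorb insertI1 insert_Diff1 insert_absorb S'_def Diff_iff singletonD zz(4))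
            then show "z \<in> (\<lambda>y. (insert y S', y)) ` (A - S')" using zz unfolding subs_def by auto
          next
            fix z assume "z \<in> (\<lambda>y. (insert y S', y)) ` (A - S')"
            then obtain y where y: "z = (insert y S', y)" "y \<in> A" "y \<notin> S'" by auto
            have "card (insert y S') = l" using y S'f cS' False by simp
            then show "z \<in> Sigma (subs l A) (F S)" using y S'A SS' xS' unfolding subs_def F_def by auto
          qed
          have "(\<Sum>T\<in>subs l A. card (F S T)) = card (Sigma (subs l A) (F S))"
            using fin by (subst card_SigmaI) (auto simp: F_def subs_def intro: finite_subset[OF _ A])
          also have "\<dots> = card (A - S')" unfolding sig by (rule card_image) (auto simp: inj_on_def)
          also have "\<dots> = Suc n - l" using S'A S'f cS' False A by (simp add: card_Diff_subset n_def)
          finally have cnt: "(\<Sum>T\<in>subs l A. card (F S T)) = Suc n - l" .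
          have "p / real l * real (Suc n - l) = real (Suc n - l) / real t" using False by (simp add: p_def)
          also have "\<dots> = 1 - p" using l t by (simp add: p_def n_def of_nat_diff diff_divide_distrib)
          finally have "p / real l * real (Suc n - l) = 1 - p" .
          then show ?thesis using L r S0 Nc goal cnt by simp
        qed
      next
        case Sout: False
        have r: "pmf (pmf_of_set (subs l (insert x A))) S = 0"
          using Sout fin' ne' by simp
        have S0: "S \<notin> subs l A" using Sout unfolding subs_def by auto
        have "\<And>T. T \<in> subs l A \<Longrightarrow> F S T = {}" using Sout notin by (auto simp: F_def)
        then have "(\<Sum>T\<in>subs l A. card (F S T)) = 0" by simp
        then show ?thesis using L r S0 by simp
      qed
    qed
  qed
qed



lemma aux_uniform:
  "finite A \<Longrightarrow> distinct ys \<Longrightarrow> set ys \<inter> A = {} \<Longrightarrow> l \<le> card A \<Longrightarrow> t = Suc (card A) \<Longrightarrow>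
   bind_pmf (pmf_of_set (subs l A)) (subsample_aux l t ys) = pmf_of_set (subs l (A \<union> set ys))"
proof (induction ys arbitrary: A t)
  case Nil
  then show ?case by (simp add: bind_return_pmf')
next
  case (Cons x ys)
  have x: "x \<notin> A" using Cons.prems by auto
  have "bind_pmf (pmf_of_set (subs l A)) (subsample_aux l t (x # ys))
      = bind_pmf (bind_pmf (pmf_of_set (subs l A)) (\<lambda>T. bind_pmf (bernoulli_pmf (real l / real t)) (\<lambda>b.
            if b then map_pmf (\<lambda>y. insert x (T - {y})) (pmf_of_set T) else return_pmf T)))
          (subsample_aux l (Suc t) ys)"
    unfolding bind_assoc_pmf by (rule arg_cong[where f="bind_pmf _"]) (rule ext, simp)
  also have "\<dots> = bind_pmf (pmf_of_set (subs l (insert x A))) (subsample_aux l (Suc t) ys)"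
    using step_uniform[OF Cons.prems(1) x Cons.prems(4,5)] by simp
  also have "\<dots> = pmf_of_set (subs l (insert x A \<union> set ys))"
    using Cons.prems x by (intro Cons.IH) auto
  also have "insert x A \<union> set ys = A \<union> set (x # ys)" by auto
  finally show ?case .
qed

lemma subsample_uniform:
  assumes "distinct xs" "l \<le> length xs"
  shows "subsample l xs = pmf_of_set (subs l (set xs))"
proof -
  define A where "A = set (take l xs)"
  have cA: "card A = l" using assms by (simp add: A_def distinct_card)
  have fA: "finite A" by (simp add: A_def)
  have sA: "subs l A = {A}" unfolding subs_def using cA fA
    by (auto dest: card_subset_eq[OF fA])
  have "subsample l xs = bind_pmf (pmf_of_set (subs l A)) (subsample_aux l (Suc l) (drop l xs))"
    unfolding subsample_def A_def[symmetric] sA by (simp add: pmf_of_set_singleton bind_return_pmf)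
  also have "\<dots> = pmf_of_set (subs l (A \<union> set (drop l xs)))"
    using assms fA cA by (intro aux_uniform) (use set_take_disj_set_drop_if_distinct[OF assms(1), of l l] in \<open>auto simp: A_def\<close>)
  also have "A \<union> set (drop l xs) = set xs" unfolding A_def
    by (metis append_take_drop_id set_append)
  finally show ?thesis .
qed



lemma assign_prop:
  assumes "ts \<noteq> []"
  shows "assign d ts x < length ts \<and> (\<forall>j<length ts. d x (ts ! assign d ts x) \<le> d x (ts ! j))"
proof -
  define m where "m = Min ((\<lambda>j. d x (ts ! j)) ` {..<length ts})"
  have "m \<in> (\<lambda>j. d x (ts ! j)) ` {..<length ts}" unfolding m_def using assms by (intro Min_in) auto
  then obtain i where i: "i < length ts" "d x (ts ! i) = m" by auto
  have "\<forall>j<length ts. d x (ts ! i) \<le> d x (ts ! j)" using i unfolding m_def by (auto intro: Min_le)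
  then have "\<exists>i. i < length ts \<and> (\<forall>j<length ts. d x (ts ! i) \<le> d x (ts ! j))" using i by blast
  then show ?thesis unfolding assign_def by (rule LeastI_ex)
qed

lemma hit_refines:
  assumes part: "partition_on X C" and TX: "set ts \<subseteq> X"
    and hit: "\<forall>B\<in>C. set ts \<inter> core X d B \<noteq> {}"
  shows "refinement (induced_clustering X d ts) C"
proof -
  have K: "ts ! assign d ts x \<in> B" if B: "B \<in> C" "x \<in> B" for x B
  proof -
    obtain z where z: "z \<in> set ts" "z \<in> core X d B" using hit B by blast
    then have ne: "ts \<noteq> []" by auto
    obtain jz where jz: "jz < length ts" "ts ! jz = z" using z(1) by (auto simp: in_set_conv_nth)
    note ap = assign_prop[OF ne, of d x]
    have le: "d x (ts ! assign d ts x) \<le> d x z" using ap jz by auto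
    show ?thesis
    proof (rule ccontr)
      assume nb: "ts ! assign d ts x \<notin> B"
      have "ts ! assign d ts x \<in> X" using ap TX nth_mem by blast
      then have "d x z < d x (ts ! assign d ts x)" using z(2) B nb unfolding core_def by auto
      then show False using le by simp
    qed
  qed
  show ?thesis unfolding refinement_def same_cluster_def induced_clustering_def
  proof (intro allI impI)
    fix x y assume "\<exists>Ba\<in>{{x \<in> X. assign d ts x = i} |i. i < length ts} - {{}}. x \<in> Ba \<and> y \<in> Ba"
    then obtain i where xy: "x \<in> X" "y \<in> X" "assign d ts x = i" "assign d ts y = i" by auto
    obtain Bx where Bx: "Bx \<in> C" "x \<in> Bx" using part xy(1) unfolding partition_on_def by auto
    obtain By where By: "By \<in> C" "y \<in> By" using part xy(2) unfolding partition_on_def by auto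
    have "ts ! i \<in> Bx" "ts ! i \<in> By" using K[OF Bx] K[OF By] xy by auto
    then have "Bx = By" using part Bx By unfolding partition_on_def disjoint_def by blast
    then show "\<exists>B\<in>C. x \<in> B \<and> y \<in> B" using Bx By by auto
  qed
qed

lemma binom_absorb2: "Suc k * (n choose Suc k) = (n - k) * (n choose k)"
  using binomial_absorption[of k n] binomial_absorb_comp[of n k] by simp

lemma binom_ratio_nat: "m \<le> n \<Longrightarrow> (m choose l) * n ^ l \<le> (n choose l) * m ^ l"
proof (induction l)
  case 0 then show ?case by simp
next
  case (Suc l)
  have key: "(m - l) * n \<le> (n - l) * m"
  proof (cases "l \<le> m")
    case True
    have a: "(m - l) * n = m * n - l * n" by (simp add: diff_mult_distrib)
    have b: "(n - l) * m = m * n - l * m" by (simp add: diff_mult_distrib2 mult.commute)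
    have "l * m \<le> l * n" using Suc.prems by simp
    then show ?thesis unfolding a b by (rule diff_le_mono2)
  next
    case False then show ?thesis by simp
  qed
  have "Suc l * ((m choose Suc l) * n ^ Suc l) = (Suc l * (m choose Suc l)) * n ^ Suc l"
    by (simp only: mult.assoc)
  also have "\<dots> = ((m - l) * (m choose l)) * (n * n ^ l)" by (simp only: binom_absorb2 power_Suc)
  also have "\<dots> = ((m - l) * n) * ((m choose l) * n ^ l)" by (simp only: mult_ac)
  also have "\<dots> \<le> ((n - l) * m) * ((n choose l) * m ^ l)"
    using key Suc.IH[OF Suc.prems] by (rule mult_le_mono)
  also have "\<dots> = ((n - l) * (n choose l)) * (m * m ^ l)" by (simp only: mult_ac)
  also have "\<dots> = (Suc l * (n choose Suc l)) * m ^ Suc l" by (simp only: binom_absorb2 power_Suc)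
  also have "\<dots> = Suc l * ((n choose Suc l) * m ^ Suc l)" by (simp only: mult.assoc)
  finally show ?case using Suc_mult_le_cancel1 by blast
qed

lemma prob_miss:
  assumes X: "finite X" and K: "K \<subseteq> X" and l: "l \<le> card X"
  shows "measure (pmf_of_set (subs l X)) {T. T \<inter> K = {}}
           \<le> exp (- real (card K) / real (card X) * real l)"
proof (cases "card X = 0")
  case True
  then show ?thesis by simp
next
  case False
  define n where "n = card X"
  define c where "c = card K"
  have cn: "c \<le> n" using K X by (simp add: c_def n_def card_mono)
  have npos: "real n > 0" using False by (simp add: n_def)
  have fin: "finite (subs l X)" and ne: "subs l X \<noteq> {}" using X l by (simp_all add: subs_finite subs_ne)
  have eqs: "subs l X \<inter> {T. T \<inter> K = {}} = subs l (X - K)" unfolding subs_def by auto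
  have cXK: "card (X - K) = n - c" using K X by (simp add: card_Diff_subset n_def c_def finite_subset)
  have "measure (pmf_of_set (subs l X)) {T. T \<inter> K = {}} = real ((n - c) choose l) / real (n choose l)"
    using fin ne X by (simp add: measure_pmf_of_set eqs card_subs cXK n_def)
  also have "\<dots> \<le> (real (n - c) / real n) ^ l"
  proof -
    have Np: "real (n choose l) > 0" using l by (simp add: n_def)
    have "real ((n - c) choose l) * real n ^ l \<le> real (n choose l) * real (n - c) ^ l"
      using binom_ratio_nat[of "n - c" n l] by (metis diff_le_self of_nat_le_iff of_nat_mult of_nat_power)
    then show ?thesis using Np npos by (simp add: field_simps power_divide)
  qed
  also have "\<dots> = (1 + (- real c / real n)) ^ l" using cn npos by (simp add: of_nat_diff field_simps)
  also have "\<dots> \<le> exp (- real c / real n) ^ l"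
  proof (rule power_mono)
    show "0 \<le> 1 + - real c / real n" using cn npos by (simp add: field_simps)
  qed (rule exp_ge_add_one_self)
  also have "\<dots> = exp (- real c / real n * real l)" by (metis exp_of_nat_mult mult.commute)
  finally show ?thesis by (simp add: c_def n_def)
qed



theorem mainTheorem12:
  fixes X :: "'a set" and d :: "'a \<Rightarrow> 'a \<Rightarrow> real" and C :: "'a set set"
    and l :: nat and xs :: "'a list"
  assumes "finite X" and "distance_space X d"
    and "partition_on X C"
    and "card C \<le> l" and "l \<le> card X"
    and "distinct xs" and "set xs = X"
  shows "measure_pmf.prob (subsample l xs)
           {T. \<forall>ts. distinct ts \<and> set ts = T \<longrightarrow> refinement (induced_clustering X d ts) C}
         \<ge> 1 - real (card C) *
               exp (- (real (Min ((\<lambda>B. card (core X d B)) ` C)) / real (card X)) * real l)"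
proof -
  note X = assms(1) and part = assms(3) and l = assms(5)
  define M where "M = pmf_of_set (subs l X)"
  define G where "G = {T. \<forall>ts. distinct ts \<and> set ts = T \<longrightarrow> refinement (induced_clustering X d ts) C}"
  define Bad where "Bad = (\<Union>B\<in>C. {T. T \<inter> core X d B = {}})"
  define E where "E = exp (- (real (Min ((\<lambda>B. card (core X d B)) ` C)) / real (card X)) * real l)"
  have lenx: "length xs = card X" using assms(6,7) distinct_card by metis
  have SM: "subsample l xs = M" unfolding M_def using assms(6,7) l lenx
    by (metis subsample_uniform)
  have fin: "finite (subs l X)" and ne: "subs l X \<noteq> {}" using X l by (simp_all add: subs_finite subs_ne)
  have setM: "set_pmf M = subs l X" unfolding M_def using fin ne by simp
  have finC: "finite C" using part X unfolding partition_on_def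
    by (meson Sup_upper finite_UnionD)
  have sub: "(UNIV - G) \<inter> set_pmf M \<subseteq> Bad"
  proof
    fix T assume T: "T \<in> (UNIV - G) \<inter> set_pmf M"
    then have TX: "T \<subseteq> X" using setM unfolding subs_def by auto
    show "T \<in> Bad"
    proof (rule ccontr)
      assume "T \<notin> Bad"
      then have hit: "\<forall>B\<in>C. T \<inter> core X d B \<noteq> {}" unfolding Bad_def by auto
      have "T \<in> G" unfolding G_def using hit_refines[OF part] TX hit by auto
      then show False using T by auto
    qed
  qed
  have "measure M (UNIV - G) = measure M ((UNIV - G) \<inter> set_pmf M)" by (simp add: measure_Int_set_pmf)
  also have "\<dots> \<le> measure M Bad" using sub by (intro measure_pmf.finite_measure_mono) auto
  also have "\<dots> \<le> (\<Sum>B\<in>C. measure M {T. T \<inter> core X d B = {}})"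
    unfolding Bad_def using finC by (intro measure_pmf.finite_measure_subadditive_finite) auto
  also have "\<dots> \<le> (\<Sum>B\<in>C. E)"
  proof (rule sum_mono)
    fix B assume B: "B \<in> C"
    have BX: "B \<subseteq> X" using part B unfolding partition_on_def by auto
    have KX: "core X d B \<subseteq> X" using BX unfolding core_def by auto
    have "measure M {T. T \<inter> core X d B = {}} \<le> exp (- real (card (core X d B)) / real (card X) * real l)"
      unfolding M_def using prob_miss[OF X KX l] .
    also have "\<dots> \<le> E"
    proof -
      have "Min ((\<lambda>B. card (core X d B)) ` C) \<le> card (core X d B)" using finC B by (intro Min_le) auto
      then have "real (Min ((\<lambda>B. card (core X d B)) ` C)) / real (card X) \<le> real (card (core X d B)) / real (card X)"
        by (intro divide_right_mono) auto
      then have "- (real (card (core X d B)) / real (card X)) * real l \<le> - (real (Min ((\<lambda>B. card (core X d B)) ` C)) / real (card X)) * real l"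
        by (intro mult_right_mono) auto
      then show ?thesis unfolding E_def by simp
    qed
    finally show "measure M {T. T \<inter> core X d B = {}} \<le> E" .
  qed
  also have "\<dots> = real (card C) * E" by simp
  finally have bad: "measure M (UNIV - G) \<le> real (card C) * E" .
  have "measure M (UNIV - G) = 1 - measure M G"
    using measure_pmf.prob_compl[of G M] by simp
  then show ?thesis using bad SM unfolding G_def E_def by simp
qed


end
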